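(* Let $1\le p,q<\infty$, $\theta>0$, and let $p'$ satisfy $\frac1p+\frac1{p'}=1$. If $g\in l^{q)',\theta}(L^{p'})$, then the multiplication operator $M_gf=gf$ is bounded from $l^{q),\theta}(L^p)$ to $L^1(\mathbb R)$ and $\|M_g\|\le\|g\|_{p',q)',\theta}$.
   Context: Index set $\mathbb Z$, $I_k=[k,k+1)$. The space $l^{q),\theta}(L^p)$ consists of complex-valued measurable $f$ on $\mathbb R$ with $f\chi_{I_k}\in L^p$ for all $k$ and $\|f\|_{p,q),\theta}:=\sup_{\varepsilon>0}\Big(\varepsilon^{\theta}\sum_{k\in\mathbb Z}\big(\int_{I_k}|f|^p\big)^{\frac{q(1+\varepsilon)}{p}}\Big)^{\frac{1}{q(1+\varepsilon)}}<\infty$. The small Lebesgue sequence space $l^{q)',\theta}$ consists of sequences $y=\{y_k\}_{k\in\mathbb Z}$ with $$\|y\|_{l^{q)',\theta}}:=\inf\Big\{\sum_{j\in\mathbb Z}\inf_{\varepsilon>0}\varepsilon^{\frac{-\theta}{q(1+\varepsilon)}}\Big(\sum_{k\in\mathbb Z}y_{k,j}^{(q(1+\varepsilon))'}\Big)^{\frac{1}{(q(1+\varepsilon))'}}\Big\}<\infty,$$ the outer infimum over all decompositions $|y_k|=\sum_{j\in\mathbb Z}y_{k,j}$ with $y_{k,j}\ge0$, and $(q(1+\varepsilon))'$ the conjugate exponent of $q(1+\varepsilon)$. For $1\le r\le\infty$, $l^{q)',\theta}(L^{r})$ consists of measurable $g$ on $\mathbb R$ with $g\chi_{I_k}\in L^{r}$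 for all $k$ and $\|g\|_{r,q)',\theta}:=\big\|\{\|g\chi_{I_k}\|_{L^{r}}\}_{k\in\mathbb Z}\big\|_{l^{q)',\theta}}<\infty$. *)

theory Defs
  imports "HOL-Analysis.Analysis"
begin

definition Ik :: "int \<Rightarrow> real set" where
  "Ik k = {real_of_int k ..< real_of_int k + 1}"

text \<open>Real power of an extended nonnegative real (used only with positive exponents);
  infinity stays infinity.\<close>
definition epow :: "ennreal \<Rightarrow> real \<Rightarrow> ennreal" where
  "epow x a = (if x = top then top else ennreal (enn2real x powr a))"

definition loc_int :: "real \<Rightarrow> (real \<Rightarrow> complex) \<Rightarrow> int \<Rightarrow> ennreal" where
  "loc_int p f k = (\<integral>\<^sup>+ x \<in> Ik k. ennreal (norm (f x) powr p) \<partial>lebesgue)"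

definition loc_esssup :: "(real \<Rightarrow> complex) \<Rightarrow> int \<Rightarrow> ennreal" where
  "loc_esssup g k = Inf {C. AE x in lebesgue. x \<in> Ik k \<longrightarrow> ennreal (norm (g x)) \<le> C}"

definition locL_mem :: "ennreal \<Rightarrow> (real \<Rightarrow> complex) \<Rightarrow> int \<Rightarrow> bool" where
  "locL_mem r g k \<longleftrightarrow> g \<in> borel_measurable lebesgue \<and>
     (if r = top then loc_esssup g k < top else loc_int (enn2real r) g k < top)"

definition locL_norm :: "ennreal \<Rightarrow> (real \<Rightarrow> complex) \<Rightarrow> int \<Rightarrow> real" where
  "locL_norm r g k = enn2real
     (if r = top then loc_esssup g k else epow (loc_int (enn2real r) g k) (1 / enn2real r))"

definition grand_norm :: "real \<Rightarrow> real \<Rightarrow> real \<Rightarrow> (real \<Rightarrow> complex) \<Rightarrow> ennreal" where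
  "grand_norm p q \<theta> f = (SUP \<epsilon> \<in> {0<..}.
      epow (ennreal (\<epsilon> powr \<theta>) *
            infsum (\<lambda>k. epow (loc_int p f k) (q * (1 + \<epsilon>) / p)) UNIV)
           (1 / (q * (1 + \<epsilon>))))"

definition grand_space :: "real \<Rightarrow> real \<Rightarrow> real \<Rightarrow> (real \<Rightarrow> complex) set" where
  "grand_space p q \<theta> = {f. f \<in> borel_measurable lebesgue \<and>
      (\<forall>k. loc_int p f k < top) \<and> grand_norm p q \<theta> f < top}"

definition conj_exp :: "real \<Rightarrow> real" where
  "conj_exp s = s / (s - 1)"

definition decomps :: "(int \<Rightarrow> real) \<Rightarrow> (int \<Rightarrow> int \<Rightarrow> real) set" where
  "decomps y = {Y. (\<forall>k j. 0 \<le> Y k j) \<and> (\<forall>k. ((\<lambda>j. Y k j) has_sum \<bar>y k\<bar>) UNIV)}"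

definition small_norm :: "real \<Rightarrow> real \<Rightarrow> (int \<Rightarrow> real) \<Rightarrow> ennreal" where
  "small_norm q \<theta> y = (INF Y \<in> decomps y.
      infsum (\<lambda>j. INF \<epsilon> \<in> {0<..}.
         ennreal (\<epsilon> powr (- \<theta> / (q * (1 + \<epsilon>)))) *
         epow (infsum (\<lambda>k. ennreal (Y k j powr conj_exp (q * (1 + \<epsilon>)))) UNIV)
              (1 / conj_exp (q * (1 + \<epsilon>)))) UNIV)"

definition small_mixed_norm :: "ennreal \<Rightarrow> real \<Rightarrow> real \<Rightarrow> (real \<Rightarrow> complex) \<Rightarrow> ennreal" where
  "small_mixed_norm r q \<theta> g = small_norm q \<theta> (\<lambda>k. locL_norm r g k)"

definition small_space :: "ennreal \<Rightarrow> real \<Rightarrow> real \<Rightarrow> (real \<Rightarrow> complex) set" where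
  "small_space r q \<theta> = {g. g \<in> borel_measurable lebesgue \<and>
      (\<forall>k. locL_mem r g k) \<and> small_mixed_norm r q \<theta> g < top}"

end

theory Submission
  imports Defs
begin

lemma infsum_nn_int:
  fixes f :: "int \<Rightarrow> ennreal"
  shows "infsum f UNIV = (\<integral>\<^sup>+k. f k \<partial>count_space UNIV)"
proof -
  have inf: "infsum f UNIV = (SUP F\<in>{F. finite F \<and> F \<subseteq> UNIV}. sum f F)"
    by (rule nonneg_infsum_complete) simp
  define h where "h = from_nat_into (UNIV::int set)"
  have bij: "bij_betw h UNIV UNIV"
    unfolding h_def by (rule bij_betw_from_nat_into) auto
  have "(\<integral>\<^sup>+k. f k \<partial>count_space UNIV) = (\<integral>\<^sup>+n. f (h n) \<partial>count_space UNIV)"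
    by (rule nn_integral_bij_count_space[OF bij, symmetric])
  also have "\<dots> = (\<Sum>n. f (h n))" by (rule nn_integral_count_space_nat)
  also have "\<dots> = (SUP n. \<Sum>i<n. f (h i))" by (rule suminf_eq_SUP)
  finally have I: "(\<integral>\<^sup>+k. f k \<partial>count_space UNIV) = (SUP n. \<Sum>i<n. f (h i))" .
  show ?thesis
  proof (rule antisym)
    show "infsum f UNIV \<le> (\<integral>\<^sup>+k. f k \<partial>count_space UNIV)"
      unfolding inf
    proof (rule SUP_least)
      fix F assume "F \<in> {F. finite F \<and> F \<subseteq> (UNIV::int set)}"
      then have F: "finite F" by auto
      have "sum f F = (\<integral>\<^sup>+k. f k * indicator F k \<partial>count_space UNIV)"
        using F by (subst nn_integral_indicator_finite) auto
      also have "\<dots> \<le> (\<integral>\<^sup>+k. f k \<partial>count_space UNIV)"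
        by (intro nn_integral_mono) (auto split: split_indicator)
      finally show "sum f F \<le> (\<integral>\<^sup>+k. f k \<partial>count_space UNIV)" .
    qed
  next
    show "(\<integral>\<^sup>+k. f k \<partial>count_space UNIV) \<le> infsum f UNIV"
      unfolding I inf
    proof (rule SUP_least)
      fix n
      have inj: "inj_on h {..<n}" using bij bij_betw_imp_inj_on by (metis inj_on_subset subset_UNIV)
      have "(\<Sum>i<n. f (h i)) = sum f (h ` {..<n})" using sum.reindex[OF inj, of f] by simp
      also have "\<dots> \<le> (SUP F\<in>{F. finite F \<and> F \<subseteq> UNIV}. sum f F)"
        by (rule SUP_upper) auto
      finally show "(\<Sum>i<n. f (h i)) \<le> (SUP F\<in>{F. finite F \<and> F \<subseteq> UNIV}. sum f F)" .
    qed
  qed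
qed

lemma nn_zero_AE:
  fixes f :: "'a \<Rightarrow> real"
  assumes fm: "f \<in> borel_measurable M" and f0: "\<And>x. 0 \<le> f x" and p: "0 < p"
    and z: "(\<integral>\<^sup>+x. ennreal (f x powr p) \<partial>M) = 0"
  shows "AE x in M. f x = 0"
proof -
  have "AE x in M. ennreal (f x powr p) = 0"
    using z by (subst (asm) nn_integral_0_iff_AE) (use fm in auto)
  then show ?thesis by eventually_elim (use f0 in simp)
qed

lemma holder_nn:
  fixes f g :: "'a \<Rightarrow> real"
  assumes fm: "f \<in> borel_measurable M" and gm: "g \<in> borel_measurable M"
    and f0: "\<And>x. 0 \<le> f x" and g0: "\<And>x. 0 \<le> g x"
    and p: "1 < p" and q: "1 < q" and pq: "1/p + 1/q = 1"
  shows "(\<integral>\<^sup>+x. ennreal (f x * g x) \<partial>M) \<le>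
     epow (\<integral>\<^sup>+x. ennreal (f x powr p) \<partial>M) (1/p) * epow (\<integral>\<^sup>+x. ennreal (g x powr q) \<partial>M) (1/q)"
proof -
  define A where "A = (\<integral>\<^sup>+x. ennreal (f x powr p) \<partial>M)"
  define B where "B = (\<integral>\<^sup>+x. ennreal (g x powr q) \<partial>M)"
  have epos: "0 < epow X e" if "X \<noteq> 0" "0 < e" for X e
    using that by (cases X) (auto simp: epow_def)
  have "(\<integral>\<^sup>+x. ennreal (f x * g x) \<partial>M) \<le> epow A (1/p) * epow B (1/q)"
  proof (cases "A = 0 \<or> B = 0")
    case True
    then have "AE x in M. f x * g x = 0"
    proof
      assume "A = 0"
      then have "AE x in M. f x = 0" using nn_zero_AE[OF fm f0, of p] p A_def by auto
      then show ?thesis by eventually_elim simp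
    next
      assume "B = 0"
      then have "AE x in M. g x = 0" using nn_zero_AE[OF gm g0, of q] q B_def by auto
      then show ?thesis by eventually_elim simp
    qed
    then have "(\<integral>\<^sup>+x. ennreal (f x * g x) \<partial>M) = (\<integral>\<^sup>+x. 0 \<partial>M)"
      by (intro nn_integral_cong_AE) auto
    then show ?thesis by simp
  next
    case False
    then have A0: "A \<noteq> 0" and B0: "B \<noteq> 0" by auto
    show ?thesis
    proof (cases "A = top \<or> B = top")
      case True
      have "epow A (1/p) * epow B (1/q) = top"
      proof -
        have "epow A (1/p) \<noteq> 0" "epow B (1/q) \<noteq> 0"
          using epos[OF A0, of "1/p"] epos[OF B0, of "1/q"] p q by auto
        moreover have "epow A (1/p) = top \<or> epow B (1/q) = top"
          using True by (auto simp: epow_def)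
        ultimately show ?thesis by (auto simp: ennreal_mult_eq_top_iff)
      qed
      then show ?thesis by simp
    next
      case False
      then obtain a b where Aa: "A = ennreal a" and Bb: "B = ennreal b" and a0: "0 \<le> a" and b0: "0 \<le> b"
        by (metis ennreal_cases top_neq_ennreal infinity_ennreal_def)
      then have apos: "0 < a" and bpos: "0 < b" using A0 B0 by auto
      define C where "C = a powr (1/p) * b powr (1/q)"
      have Cpos: "0 < C" using apos bpos by (simp add: C_def)
      have pw: "f x * g x \<le> C * (f x powr p / (p*a) + g x powr q / (q*b))" for x
      proof -
        define u where "u = f x / a powr (1/p)"
        define v where "v = g x / b powr (1/q)"
        have "u * v \<le> u powr p / p + v powr q / q"
          using Youngs_inequality[OF p q pq, of u v] f0 g0 by (simp add: u_def v_def)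
        moreover have "u powr p = f x powr p / a"
          using apos p f0[of x] by (simp add: u_def powr_divide powr_powr)
        moreover have "v powr q = g x powr q / b"
          using bpos q g0[of x] by (simp add: v_def powr_divide powr_powr)
        moreover have "f x * g x = C * (u * v)"
          using apos bpos by (simp add: u_def v_def C_def)
        ultimately have "u * v \<le> f x powr p / (p*a) + g x powr q / (q*b)"
          by (simp add: field_simps)
        then have "C * (u * v) \<le> C * (f x powr p / (p*a) + g x powr q / (q*b))"
          using Cpos by (simp add: mult_left_mono)
        then show ?thesis using \<open>f x * g x = C * (u * v)\<close> by simp
      qed
      have "(\<integral>\<^sup>+x. ennreal (f x * g x) \<partial>M) \<le>
            (\<integral>\<^sup>+x. ennreal C * (ennreal (1/(p*a)) * ennreal (f x powr p) + ennreal (1/(q*b)) * ennreal (g x powr q)) \<partial>M)"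
      proof (intro nn_integral_mono)
        fix x
        have "ennreal (f x * g x) \<le> ennreal (C * (f x powr p / (p*a) + g x powr q / (q*b)))"
          using pw by (rule ennreal_leI)
        also have "\<dots> = ennreal C * (ennreal (1/(p*a)) * ennreal (f x powr p) + ennreal (1/(q*b)) * ennreal (g x powr q))"
        proof -
          have "f x powr p / (p*a) + g x powr q / (q*b) = (1/(p*a)) * f x powr p + (1/(q*b)) * g x powr q"
            by simp
          then have "ennreal (f x powr p / (p*a) + g x powr q / (q*b)) =
             ennreal (1/(p*a)) * ennreal (f x powr p) + ennreal (1/(q*b)) * ennreal (g x powr q)"
          proof -
            have e1: "ennreal (1/(p*a)) * ennreal (f x powr p) = ennreal (f x powr p / (p*a))"
              using apos p by (subst ennreal_mult[symmetric]) auto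
            have e2: "ennreal (1/(q*b)) * ennreal (g x powr q) = ennreal (g x powr q / (q*b))"
              using bpos q by (subst ennreal_mult[symmetric]) auto
            show ?thesis unfolding e1 e2 using apos bpos p q
              by (subst ennreal_plus[symmetric]) auto
          qed
          moreover have "ennreal (C * (f x powr p / (p*a) + g x powr q / (q*b))) =
              ennreal C * ennreal (f x powr p / (p*a) + g x powr q / (q*b))"
            using Cpos apos bpos p q by (intro ennreal_mult) auto
          ultimately show ?thesis by simp
        qed
        finally show "ennreal (f x * g x) \<le> ennreal C * (ennreal (1/(p*a)) * ennreal (f x powr p) + ennreal (1/(q*b)) * ennreal (g x powr q))" .
      qed
      also have "\<dots> = ennreal C * (ennreal (1/(p*a)) * A + ennreal (1/(q*b)) * B)"
        unfolding A_def B_def using fm gm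
        by (simp add: nn_integral_cmult nn_integral_add)
      also have "\<dots> = ennreal C"
        using apos bpos p q pq Aa Bb
        by (simp add: ennreal_mult''[symmetric] ennreal_plus[symmetric] del: ennreal_plus)
      also have "\<dots> = epow A (1/p) * epow B (1/q)"
        using Aa Bb a0 b0 by (simp add: epow_def C_def ennreal_mult)
      finally show ?thesis .
    qed
  qed
  then show ?thesis unfolding A_def B_def .
qed

lemma conj_cases:
  fixes p :: real and p' :: ennreal
  assumes p1: "1 \<le> p" and h: "1 / ennreal p + 1 / p' = 1"
  shows "(p = 1 \<and> p' = top) \<or> (1 < p \<and> (\<exists>r. p' = ennreal r \<and> 1 < r \<and> 1/p + 1/r = 1))"
proof (cases "p = 1")
  case True
  then have "1 + 1 / p' = 1 + 0" using h by simp
  then have "1 / p' = 0" using ennreal_add_left_cancel[of 1 "1/p'" 0] by simp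
  then have "p' = top" by (simp add: ennreal_divide_eq_0_iff)
  then show ?thesis using True by simp
next
  case False
  then have p: "1 < p" using p1 by simp
  have ip: "1 / ennreal p = ennreal (1/p)" using p divide_ennreal[of 1 p] by simp
  have "p' \<noteq> top"
  proof
    assume "p' = top"
    then have "ennreal (1/p) = 1" using h ip by simp
    then have "1/p = 1" by simp
    then show False using p by simp
  qed
  moreover have "p' \<noteq> 0"
  proof
    assume "p' = 0"
    then show False using h by (simp add: ennreal_divide_zero)
  qed
  ultimately obtain r where r: "p' = ennreal r" "0 \<le> r"
    by (cases p' rule: ennreal_cases) auto
  have r0: "0 < r" using \<open>p' \<noteq> 0\<close> r by (cases "r = 0") auto
  then have "1 / p' = ennreal (1/r)" using r divide_ennreal[of 1 r] by simp
  then have "ennreal (1/p + 1/r) = 1" using h ip p r0 by (subst ennreal_plus) auto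
  then have e: "1/p + 1/r = 1" by simp
  have "0 < 1/p" using p by simp
  then have "1/r < 1" using e by linarith
  then have "1 < r" using r0 by (simp add: field_simps)
  then show ?thesis using p r e by auto
qed

lemma esssup_AE:
  "AE x in lebesgue. x \<in> Ik k \<longrightarrow> ennreal (norm (g x)) \<le> loc_esssup g k"
proof -
  define S where "S = {C. AE x in lebesgue. x \<in> Ik k \<longrightarrow> ennreal (norm (g x)) \<le> C}"
  have "top \<in> S" unfolding S_def by simp
  then obtain u where u: "\<And>n. u n \<in> S" "u \<longlonglongrightarrow> Inf S"
    using Inf_as_limit[of S] by blast
  have "AE x in lebesgue. \<forall>n. x \<in> Ik k \<longrightarrow> ennreal (norm (g x)) \<le> u n"
    by (subst AE_all_countable) (use u(1) in \<open>simp add: S_def\<close>)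
  then have "AE x in lebesgue. x \<in> Ik k \<longrightarrow> ennreal (norm (g x)) \<le> Inf S"
  proof eventually_elim
    case (elim x)
    then show ?case using LIMSEQ_le_const[OF u(2)] by blast
  qed
  then show ?thesis unfolding loc_esssup_def S_def .
qed

lemma epow_fin: "x < top \<Longrightarrow> epow x a = ennreal (enn2real x powr a)"
  by (simp add: epow_def)

lemma epow_cmult:
  assumes "0 < c" "0 < e"
  shows "epow (ennreal c * T) e = ennreal (c powr e) * epow T e"
proof (cases "T = top")
  case True
  then show ?thesis using assms by (simp add: epow_def ennreal_mult_top)
next
  case False
  then obtain t where t: "T = ennreal t" "0 \<le> t" by (metis ennreal_cases infinity_ennreal_def)
  then show ?thesis using assms
    by (simp add: epow_def powr_mult ennreal_mult[symmetric] enn2real_mult ennreal_mult_eq_top_iff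
        del: ennreal_mult)
qed

lemma INF_mult_bound:
  fixes X G :: ennreal and c :: "'b \<Rightarrow> ennreal"
  assumes "E \<noteq> {}" "G < top" "\<And>e. e \<in> E \<Longrightarrow> X \<le> c e * G"
  shows "X \<le> (INF e\<in>E. c e) * G"
proof (cases "G = 0")
  case True
  then obtain e where "e \<in> E" using assms by auto
  then show ?thesis using assms True by (metis mult_zero_right)
next
  case False
  then obtain \<gamma> where g: "G = ennreal \<gamma>" "0 < \<gamma>"
    using assms(2) by (metis ennreal_cases ennreal_0 infinity_ennreal_def less_irrefl le_less)
  have inv: "ennreal \<gamma> * ennreal (1/\<gamma>) = 1" using g by (simp add: ennreal_mult[symmetric])
  have "X * ennreal (1/\<gamma>) \<le> (INF e\<in>E. c e)"
  proof (rule INF_greatest)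
    fix e assume "e \<in> E"
    then have "X * ennreal (1/\<gamma>) \<le> c e * G * ennreal (1/\<gamma>)" using assms by (simp add: mult_right_mono)
    also have "\<dots> = c e" using inv g by (simp add: mult.assoc)
    finally show "X * ennreal (1/\<gamma>) \<le> c e" .
  qed
  then have "X * ennreal (1/\<gamma>) * G \<le> (INF e\<in>E. c e) * G" by (simp add: mult_right_mono)
  moreover have "X * ennreal (1/\<gamma>) * G = X * (ennreal \<gamma> * ennreal (1/\<gamma>))"
    using g by (simp add: mult_ac)
  ultimately show ?thesis using inv by simp
qed

lemma Ik_sets[measurable]: "Ik k \<in> sets lebesgue"
  by (simp add: Ik_def)

lemma Ik_indicator: "indicator (Ik k) x = (indicator {\<lfloor>x\<rfloor>} k :: ennreal)"
  unfolding Ik_def indicator_def using floor_eq_iff[of x k] by auto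

lemma split_Ik:
  fixes h :: "real \<Rightarrow> ennreal"
  assumes [measurable]: "h \<in> borel_measurable lebesgue"
  shows "(\<integral>\<^sup>+x. h x \<partial>lebesgue) = (\<integral>\<^sup>+k. (\<integral>\<^sup>+x\<in>Ik k. h x \<partial>lebesgue) \<partial>count_space UNIV)"
proof -
  have "(\<integral>\<^sup>+x. h x \<partial>lebesgue) = (\<integral>\<^sup>+x. (\<integral>\<^sup>+k. h x * indicator (Ik k) x \<partial>count_space UNIV) \<partial>lebesgue)"
    by (intro nn_integral_cong) (simp add: Ik_indicator nn_integral_cmult_indicator)
  also have "\<dots> = (\<integral>\<^sup>+k. (\<integral>\<^sup>+x. h x * indicator (Ik k) x \<partial>lebesgue) \<partial>count_space UNIV)"
    by (rule nn_integral_count_space_nn_integral) auto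
  finally show ?thesis .
qed

lemma ennreal_infsum_real:
  fixes y :: "int \<Rightarrow> real"
  assumes "(y has_sum s) UNIV" "\<And>j. 0 \<le> y j"
  shows "ennreal s = (\<integral>\<^sup>+j. ennreal (y j) \<partial>count_space UNIV)"
proof -
  have sm: "y summable_on UNIV" using assms(1) by (auto simp: summable_on_def)
  have s: "s = infsum y UNIV" using assms(1) by (simp add: infsumI)
  have "\<And>F. finite F \<Longrightarrow> sum (ennreal \<circ> y) F = ennreal (sum y F)"
    using assms(2) by (simp add: sum_ennreal)
  then have "ennreal (infsum y UNIV) = infsum (ennreal \<circ> y) UNIV"
    by (simp add: infsum_comm_additive_general sm)
  then show ?thesis using s infsum_nn_int[of "ennreal \<circ> y"] by simp
qed

theorem theorem4p2:
  fixes p q \<theta> :: real and p' :: ennreal and g :: "real \<Rightarrow> complex"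
  assumes "1 \<le> p" and "1 \<le> q" and "0 < \<theta>"
    and "1 / ennreal p + 1 / p' = 1"
    and "g \<in> small_space p' q \<theta>"
  shows "\<forall>f \<in> grand_space p q \<theta>.
           integrable lebesgue (\<lambda>x. g x * f x) \<and>
           (\<integral>\<^sup>+ x. ennreal (norm (g x * f x)) \<partial>lebesgue)
             \<le> small_mixed_norm p' q \<theta> g * grand_norm p q \<theta> f"
proof
  fix f assume fS: "f \<in> grand_space p q \<theta>"
  have fm[measurable]: "f \<in> borel_measurable lebesgue" and ffin: "\<And>k. loc_int p f k < top"
    and Gfin: "grand_norm p q \<theta> f < top" using fS by (auto simp: grand_space_def)
  have gm[measurable]: "g \<in> borel_measurable lebesgue" and gmem: "\<And>k. locL_mem p' g k"
    and Nfin: "small_mixed_norm p' q \<theta> g < top" using assms(5) by (auto simp: small_space_def)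
  define G where "G = grand_norm p q \<theta> f"
  define a where "a k = enn2real (loc_int p f k) powr (1/p)" for k
  define bn where "bn k = locL_norm p' g k" for k
  have a0: "0 \<le> a k" for k by (simp add: a_def)
  have bn0: "0 \<le> bn k" for k by (simp add: bn_def locL_norm_def)
  have ea: "epow (loc_int p f k) (1/p) = ennreal (a k)" for k
    using ffin[of k] by (simp add: epow_fin a_def)
  have local: "(\<integral>\<^sup>+ x\<in>Ik k. ennreal (norm (g x * f x)) \<partial>lebesgue) \<le> ennreal (bn k) * ennreal (a k)" for k
    using conj_cases[OF assms(1) assms(4)]
  proof (elim disjE conjE exE)
    assume p1: "p = 1" and pt: "p' = top"
    have eb: "ennreal (bn k) = loc_esssup g k"
      using gmem[of k] pt by (simp add: bn_def locL_norm_def locL_mem_def)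
    have eli: "loc_int p f k = ennreal (a k)"
      using ffin[of k] p1 by (simp add: a_def)
    have "(\<integral>\<^sup>+ x\<in>Ik k. ennreal (norm (g x * f x)) \<partial>lebesgue) \<le>
          (\<integral>\<^sup>+ x. loc_esssup g k * (ennreal (norm (f x)) * indicator (Ik k) x) \<partial>lebesgue)"
    proof (intro nn_integral_mono_AE)
      show "AE x in lebesgue. ennreal (norm (g x * f x)) * indicator (Ik k) x \<le>
               loc_esssup g k * (ennreal (norm (f x)) * indicator (Ik k) x)"
        using esssup_AE[of k g]
      proof eventually_elim
        case (elim x)
        show ?case
        proof (cases "x \<in> Ik k")
          case True
          then have "ennreal (norm (g x * f x)) = ennreal (norm (g x)) * ennreal (norm (f x))"
            by (simp add: norm_mult ennreal_mult)
          also have "\<dots> \<le> loc_esssup g k * ennreal (norm (f x))"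
            using elim True by (intro mult_right_mono) auto
          finally show ?thesis using True by simp
        qed simp
      qed
    qed
    also have "\<dots> = loc_esssup g k * loc_int p f k"
      unfolding loc_int_def using p1 by (subst nn_integral_cmult) auto
    finally show ?thesis using eb eli by simp
  next
    fix r assume p: "1 < p" and pr: "p' = ennreal r" "1 < r" "1/p + 1/r = 1"
    have rp: "1/r + 1/p = 1" using pr by simp
    have H: "(\<integral>\<^sup>+x. ennreal ((norm (g x) * indicator (Ik k) x) * (norm (f x) * indicator (Ik k) x)) \<partial>lebesgue) \<le>
      epow (\<integral>\<^sup>+x. ennreal ((norm (g x) * indicator (Ik k) x) powr r) \<partial>lebesgue) (1/r) *
      epow (\<integral>\<^sup>+x. ennreal ((norm (f x) * indicator (Ik k) x) powr p) \<partial>lebesgue) (1/p)"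
      by (rule holder_nn[OF _ _ _ _ pr(2) p rp]) auto
    have e1: "(\<integral>\<^sup>+x. ennreal ((norm (g x) * indicator (Ik k) x) * (norm (f x) * indicator (Ik k) x)) \<partial>lebesgue)
        = (\<integral>\<^sup>+ x\<in>Ik k. ennreal (norm (g x * f x)) \<partial>lebesgue)"
      by (intro nn_integral_cong) (auto simp: norm_mult split: split_indicator)
    have e2: "(\<integral>\<^sup>+x. ennreal ((norm (g x) * indicator (Ik k) x) powr r) \<partial>lebesgue) = loc_int r g k"
      unfolding loc_int_def by (intro nn_integral_cong) (auto split: split_indicator)
    have e3: "(\<integral>\<^sup>+x. ennreal ((norm (f x) * indicator (Ik k) x) powr p) \<partial>lebesgue) = loc_int p f k"
      unfolding loc_int_def by (intro nn_integral_cong) (auto split: split_indicator)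
    have eb: "epow (loc_int r g k) (1/r) = ennreal (bn k)"
      using gmem[of k] pr by (simp add: bn_def locL_norm_def locL_mem_def epow_fin)
    show ?thesis using H unfolding e1 e2 e3 eb ea .
  qed
  have total: "(\<integral>\<^sup>+ x. ennreal (norm (g x * f x)) \<partial>lebesgue) \<le>
      (\<integral>\<^sup>+ k. ennreal (bn k) * ennreal (a k) \<partial>count_space UNIV)"
    by (subst split_Ik) (auto intro!: nn_integral_mono local)

  define c where "c Y j \<epsilon> = ennreal (\<epsilon> powr (- \<theta> / (q * (1 + \<epsilon>)))) *
         epow (infsum (\<lambda>k. ennreal (Y k j powr conj_exp (q * (1 + \<epsilon>)))) UNIV)
              (1 / conj_exp (q * (1 + \<epsilon>)))" for Y :: "int \<Rightarrow> int \<Rightarrow> real" and j \<epsilon>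
  have Neq: "small_mixed_norm p' q \<theta> g = (INF Y\<in>decomps bn. infsum (\<lambda>j. INF \<epsilon>\<in>{0<..}. c Y j \<epsilon>) UNIV)"
  proof -
    have bn_fun: "bn = (\<lambda>k. locL_norm p' g k)" by (rule ext) (simp add: bn_def)
    show ?thesis by (simp add: small_mixed_norm_def small_norm_def c_def bn_fun)
  qed
  have GG: "G < top" using Gfin G_def by simp
  have perj: "(\<integral>\<^sup>+ k. ennreal (Y k j) * ennreal (a k) \<partial>count_space UNIV) \<le> (INF \<epsilon>\<in>{0<..}. c Y j \<epsilon>) * G"
    if Y0: "\<And>k j. 0 \<le> Y k j" for Y j
  proof (rule INF_mult_bound[OF _ GG])
    show "{0<..} \<noteq> ({} :: real set)" by auto
    fix \<epsilon> :: real assume "\<epsilon> \<in> {0<..}"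
    then have e0: "0 < \<epsilon>" by simp
    define s where "s = q * (1 + \<epsilon>)"
    have s1: "1 < s" using e0 assms(2) unfolding s_def
      by (smt (verit) mult_less_cancel_left1)
    define s' where "s' = conj_exp s"
    have s'1: "1 < s'" using s1 by (simp add: s'_def conj_exp_def)
    have ss: "1/s' + 1/s = 1" using s1 by (simp add: s'_def conj_exp_def field_simps)
    have H: "(\<integral>\<^sup>+ k. ennreal (Y k j * a k) \<partial>count_space UNIV) \<le>
        epow (\<integral>\<^sup>+ k. ennreal (Y k j powr s') \<partial>count_space UNIV) (1/s') *
        epow (\<integral>\<^sup>+ k. ennreal (a k powr s) \<partial>count_space UNIV) (1/s)"
      by (rule holder_nn[OF _ _ _ _ s'1 s1 ss]) (auto simp: Y0 a0)
    define T where "T = (\<integral>\<^sup>+ k. ennreal (a k powr s) \<partial>count_space UNIV)"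
    have pw: "epow (loc_int p f k) (q * (1 + \<epsilon>) / p) = ennreal (a k powr s)" for k
      using ffin[of k] assms(1) by (simp add: epow_fin a_def s_def powr_powr)
    have pw2: "epow (loc_int p f k) (s / p) = ennreal (a k powr s)" for k
      using pw[of k] by (simp add: s_def)
    have "epow (ennreal (\<epsilon> powr \<theta>) * infsum (\<lambda>k. epow (loc_int p f k) (q * (1 + \<epsilon>) / p)) UNIV)
           (1 / (q * (1 + \<epsilon>))) \<le> G"
      unfolding G_def grand_norm_def using e0 by (intro SUP_upper) auto
    also have "epow (ennreal (\<epsilon> powr \<theta>) * infsum (\<lambda>k. epow (loc_int p f k) (q * (1 + \<epsilon>) / p)) UNIV)
           (1 / (q * (1 + \<epsilon>))) = ennreal (\<epsilon> powr (\<theta>/s)) * epow T (1/s)"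
    proof -
      have fe: "(\<lambda>k. epow (loc_int p f k) (q * (1 + \<epsilon>) / p)) = (\<lambda>k. ennreal (a k powr s))"
        by (rule ext) (rule pw)
      have Te: "infsum (\<lambda>k. epow (loc_int p f k) (q * (1 + \<epsilon>) / p)) UNIV = T"
        unfolding fe T_def by (rule infsum_nn_int)
      show ?thesis unfolding Te unfolding s_def[symmetric] using e0 s1
        by (subst epow_cmult) (auto simp: powr_powr)
    qed
    finally have TG: "ennreal (\<epsilon> powr (\<theta>/s)) * epow T (1/s) \<le> G" .
    have one: "ennreal (\<epsilon> powr (- \<theta> / s)) * ennreal (\<epsilon> powr (\<theta>/s)) = 1"
      using e0 by (simp add: ennreal_mult[symmetric] powr_add[symmetric])
    have TG2: "epow T (1/s) \<le> ennreal (\<epsilon> powr (- \<theta> / s)) * G"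
    proof -
      have "epow T (1/s) = ennreal (\<epsilon> powr (- \<theta> / s)) * (ennreal (\<epsilon> powr (\<theta>/s)) * epow T (1/s))"
        using one by (simp add: mult.assoc[symmetric])
      also have "\<dots> \<le> ennreal (\<epsilon> powr (- \<theta> / s)) * G"
        using TG by (rule mult_left_mono) simp
      finally show ?thesis .
    qed
    have "(\<integral>\<^sup>+ k. ennreal (Y k j) * ennreal (a k) \<partial>count_space UNIV) =
          (\<integral>\<^sup>+ k. ennreal (Y k j * a k) \<partial>count_space UNIV)"
      using Y0 a0 by (simp add: ennreal_mult)
    also have "\<dots> \<le> epow (\<integral>\<^sup>+ k. ennreal (Y k j powr s') \<partial>count_space UNIV) (1/s') * epow T (1/s)"
      using H unfolding T_def .
    also have "\<dots> \<le> epow (\<integral>\<^sup>+ k. ennreal (Y k j powr s') \<partial>count_space UNIV) (1/s') * (ennreal (\<epsilon> powr (- \<theta> / s)) * G)"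
      using TG2 by (rule mult_left_mono) simp
    also have "\<dots> = c Y j \<epsilon> * G"
      unfolding c_def s'_def s_def infsum_nn_int by (simp add: mult_ac)
    finally show "(\<integral>\<^sup>+ k. ennreal (Y k j) * ennreal (a k) \<partial>count_space UNIV) \<le> c Y j \<epsilon> * G" .
  qed
  have perY: "(\<integral>\<^sup>+ x. ennreal (norm (g x * f x)) \<partial>lebesgue) \<le> infsum (\<lambda>j. INF \<epsilon>\<in>{0<..}. c Y j \<epsilon>) UNIV * G"
    if Y: "Y \<in> decomps bn" for Y
  proof -
    have Y0: "\<And>k j. 0 \<le> Y k j" and Ys: "\<And>k. ((\<lambda>j. Y k j) has_sum bn k) UNIV"
      using Y bn0 by (auto simp: decomps_def)
    have eb: "ennreal (bn k) = (\<integral>\<^sup>+ j. ennreal (Y k j) \<partial>count_space UNIV)" for k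
      by (rule ennreal_infsum_real[OF Ys Y0])
    have "(\<integral>\<^sup>+ k. ennreal (bn k) * ennreal (a k) \<partial>count_space UNIV) =
          (\<integral>\<^sup>+ k. (\<integral>\<^sup>+ j. ennreal (Y k j) * ennreal (a k) \<partial>count_space UNIV) \<partial>count_space UNIV)"
      unfolding eb by (intro nn_integral_cong) (simp add: nn_integral_multc)
    also have "\<dots> = (\<integral>\<^sup>+ j. (\<integral>\<^sup>+ k. ennreal (Y k j) * ennreal (a k) \<partial>count_space UNIV) \<partial>count_space UNIV)"
      by (rule nn_integral_count_space_nn_integral[symmetric]) auto
    also have "\<dots> \<le> (\<integral>\<^sup>+ j. (INF \<epsilon>\<in>{0<..}. c Y j \<epsilon>) * G \<partial>count_space UNIV)"
      by (intro nn_integral_mono perj Y0)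
    also have "\<dots> = infsum (\<lambda>j. INF \<epsilon>\<in>{0<..}. c Y j \<epsilon>) UNIV * G"
      by (simp add: nn_integral_multc infsum_nn_int)
    finally show ?thesis using total by simp
  qed
  have bound: "(\<integral>\<^sup>+ x. ennreal (norm (g x * f x)) \<partial>lebesgue) \<le> small_mixed_norm p' q \<theta> g * grand_norm p q \<theta> f"
    unfolding Neq G_def[symmetric]
  proof (rule INF_mult_bound[OF _ GG])
    show "decomps bn \<noteq> {}"
    proof
      assume "decomps bn = {}"
      then show False using Nfin Neq by simp
    qed
  qed (rule perY)
  have "(\<integral>\<^sup>+ x. ennreal (norm (g x * f x)) \<partial>lebesgue) < top"
    using bound Nfin Gfin by (metis ennreal_mult_less_top le_less_trans)
  then have "integrable lebesgue (\<lambda>x. g x * f x)"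
    by (intro integrableI_bounded) auto
  then show "integrable lebesgue (\<lambda>x. g x * f x) \<and>
           (\<integral>\<^sup>+ x. ennreal (norm (g x * f x)) \<partial>lebesgue)
             \<le> small_mixed_norm p' q \<theta> g * grand_norm p q \<theta> f" using bound by simp
qed

end
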